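(* Let $P$ and $Q$ be lattice paths from $(0,0)$ to $(m,r)$ with $P$ never going above $Q$. Then the dimension of the lattice path matroid polytope $\mathcal{P}(M[P,Q])$ is $m+r-k+1$, where $k$ is the number of intersection points (common lattice points) of $P$ and $Q$.
   Context: Lattice paths use steps $E=(1,0)$ and $N=(0,1)$ and are written as words $p_1p_2\cdots p_{m+r}$ in $E,N$. For lattice paths $P,Q$ from $(0,0)$ to $(m,r)$ with $P$ never above $Q$, let $u_1<\dots<u_r$ be the positions of the North steps of $P$ and $l_1<\dots<l_r$ those of $Q$; $M[P,Q]$ is the transversal matroid on ground set $[m+r]$ with presentation $\{[l_i,u_i]: i\in[r]\}$. Equivalently, an $r$-subset $B\subseteq[m+r]$ is a basis iff the lattice path having North steps exactly at the positions in $B$ (East steps elsewhere) stays in the region bounded by $P$ and $Q$. The lattice path matroid polytope is $\mathcal{P}(M[P,Q])=\mathrm{conv}\{e_B : B \text{ a basis}\}\subseteq\mathbb{R}^{m+r}$, where $e_B=\sum_{b\in B}e_b$ and $e_i$ are the standard basis vectors. *)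

theory Defs
  imports "HOL-Analysis.Analysis"
begin

text \<open>Lattice path steps: E = (1,0), N = (0,1). A path is a word of steps;
positions are 1-indexed.\<close>
datatype step = E | N

definition npos :: "step list \<Rightarrow> nat set" where
  "npos p = {i. 1 \<le> i \<and> i \<le> length p \<and> p ! (i - 1) = N}"

definition nth_npos :: "step list \<Rightarrow> nat \<Rightarrow> nat" where
  "nth_npos p i = sorted_list_of_set (npos p) ! (i - 1)"

definition is_lattice_path :: "nat \<Rightarrow> nat \<Rightarrow> step list \<Rightarrow> bool" where
  "is_lattice_path m r p \<longleftrightarrow> count_list p E = m \<and> count_list p N = r"

definition pt :: "step list \<Rightarrow> nat \<Rightarrow> nat \<times> nat" where
  "pt p i = (count_list (take i p) E, count_list (take i p) N)"

definition lattice_points :: "step list \<Rightarrow> (nat \<times> nat) set" where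
  "lattice_points p = pt p ` {0..length p}"

definition never_above :: "step list \<Rightarrow> step list \<Rightarrow> bool" where
  "never_above P Q \<longleftrightarrow> (\<forall>i \<le> length P. count_list (take i P) N \<le> count_list (take i Q) N)"

text \<open>Bases of the transversal matroid M[P,Q] with presentation
  {[l_i,u_i] : i in [r]}: the transversals of the presentation.\<close>
definition lpm_basis :: "step list \<Rightarrow> step list \<Rightarrow> nat \<Rightarrow> nat set \<Rightarrow> bool" where
  "lpm_basis P Q r B \<longleftrightarrow>
     (\<exists>f. bij_betw f {1..r} B \<and> (\<forall>i\<in>{1..r}. nth_npos Q i \<le> f i \<and> f i \<le> nth_npos P i))"

text \<open>The lattice path matroid polytope in R^{m+r}; the coordinates [m+r] are
  identified with the finite index type 'n via the bijection idx.\<close>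
definition lpm_polytope :: "(nat \<Rightarrow> 'n::finite) \<Rightarrow> step list \<Rightarrow> step list \<Rightarrow> nat \<Rightarrow> (real ^ 'n) set" where
  "lpm_polytope idx P Q r =
     convex hull {(\<Sum>b\<in>B. axis (idx b) 1) | B. lpm_basis P Q r B}"

end

theory Submission
  imports Defs
begin

lemma count_EN: "count_list xs E + count_list xs N = length xs"
proof (induction xs)
  case (Cons x xs)
  then show ?case by (cases x) auto
qed simp

lemma sorted_nth_le_iff:
  fixes S :: "nat set"
  assumes fin: "finite S" and j: "j < card S"
  shows "sorted_list_of_set S ! j \<le> a \<longleftrightarrow> j < card {x\<in>S. x \<le> a}"
proof -
  define s where "s = sorted_list_of_set S"
  have ss: "sorted_wrt (<) s" using fin by (simp add: s_def)
  have len: "length s = card S" by (simp add: s_def)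
  have sets: "set s = S" using fin by (simp add: s_def)
  have dist: "distinct s" by (simp add: s_def)
  have jl: "j < length s" using j len by simp
  have eq: "{x\<in>S. x \<le> s!j} = (!) s ` {..j}"
  proof
    show "{x\<in>S. x \<le> s!j} \<subseteq> (!) s ` {..j}"
    proof
      fix x assume "x \<in> {x\<in>S. x \<le> s!j}"
      then have xS: "x \<in> set s" and xle: "x \<le> s!j" using sets by auto
      then obtain i where i: "i < length s" "x = s!i" by (auto simp: in_set_conv_nth)
      have "i \<le> j"
      proof (rule ccontr)
        assume "\<not> i \<le> j"
        then have "s!j < s!i" using sorted_wrt_nth_less[OF ss, of j i] i by simp
        then show False using xle i by simp
      qed
      then show "x \<in> (!) s ` {..j}" using i by auto
    qed
  next
    show "(!) s ` {..j} \<subseteq> {x\<in>S. x \<le> s!j}"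
    proof
      fix x assume "x \<in> (!) s ` {..j}"
      then obtain i where i: "i \<le> j" "x = s!i" by auto
      have "s!i \<le> s!j"
        using sorted_wrt_nth_less[OF ss, of i j] i jl by (cases "i = j") auto
      moreover have "s!i \<in> S" using i jl sets by auto
      ultimately show "x \<in> {x\<in>S. x \<le> s!j}" using i by auto
    qed
  qed
  have inj: "inj_on ((!) s) {..j}"
    using dist jl by (auto simp: inj_on_def nth_eq_iff_index_eq)
  have cj: "card {x\<in>S. x \<le> s!j} = Suc j"
    using eq card_image[OF inj] by simp
  show ?thesis
  proof (cases "s!j \<le> a")
    case True
    have "{x\<in>S. x \<le> s!j} \<subseteq> {x\<in>S. x \<le> a}" using True by auto
    moreover have fin2: "finite {x\<in>S. x \<le> a}" using fin by simp
    ultimately have "Suc j \<le> card {x\<in>S. x \<le> a}"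
      using cj card_mono by metis
    then show ?thesis using True s_def by simp
  next
    case False
    have "{x\<in>S. x \<le> a} \<subseteq> {x\<in>S. x \<le> s!j} - {s!j}" using False by auto
    moreover have "card ({x\<in>S. x \<le> s!j} - {s!j}) = j"
      using cj jl sets by (subst card_Diff_singleton) auto
    moreover have fin3: "finite ({x\<in>S. x \<le> s!j} - {s!j})" using fin by simp
    ultimately have "card {x\<in>S. x \<le> a} \<le> j"
      using card_mono by metis
    then show ?thesis using False s_def by simp
  qed
qed

lemma npos_sub: "npos p \<subseteq> {1..length p}"
  by (auto simp: npos_def)

lemma finite_npos: "finite (npos p)"
  using npos_sub finite_subset by blast

lemma card_npos_le: "card (npos p \<inter> {..a}) = count_list (take a p) N"
proof (induction a)
  case 0
  have "npos p \<inter> {..0} = {}" by (auto simp: npos_def)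
  then show ?case by simp
next
  case (Suc a)
  show ?case
  proof (cases "a < length p")
    case True
    have eq: "npos p \<inter> {..Suc a} = (npos p \<inter> {..a}) \<union> (if p!a = N then {Suc a} else {})"
      using True by (auto simp: npos_def le_Suc_eq)
    have "Suc a \<notin> npos p \<inter> {..a}" by simp
    then have "card (npos p \<inter> {..Suc a}) = card (npos p \<inter> {..a}) + (if p!a = N then 1 else 0)"
      unfolding eq using finite_npos by auto
    then show ?thesis using Suc True by (simp add: take_Suc_conv_app_nth)
  next
    case False
    have "npos p \<inter> {..Suc a} = npos p \<inter> {..a}" using False by (auto simp: npos_def)
    then show ?thesis using Suc False by simp
  qed
qed

lemma card_npos: "card (npos p) = count_list p N"
proof -
  have "npos p \<inter> {..length p} = npos p" by (auto simp: npos_def)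
  then show ?thesis using card_npos_le[of p "length p"] by simp
qed

lemma KL:
  assumes "1 \<le> i" "i \<le> card (npos p)"
  shows "nth_npos p i \<le> a \<longleftrightarrow> i \<le> count_list (take a p) N"
proof -
  have "{x\<in>npos p. x \<le> a} = npos p \<inter> {..a}" by auto
  moreover have "(i - 1 < count_list (take a p) N) = (i \<le> count_list (take a p) N)"
    using assms by linarith
  ultimately show ?thesis
    using sorted_nth_le_iff[OF finite_npos, of "i - 1" p a] assms card_npos_le[of p a]
    by (simp add: nth_npos_def)
qed

lemma nth_npos_mem:
  assumes "1 \<le> i" "i \<le> card (npos p)"
  shows "nth_npos p i \<in> npos p"
proof -
  have "i - 1 < length (sorted_list_of_set (npos p))" using assms by simp
  then show ?thesis unfolding nth_npos_def
    using nth_mem set_sorted_list_of_set[OF finite_npos] by metis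
qed

lemma nth_npos_less:
  assumes "1 \<le> i" "i < j" "j \<le> card (npos p)"
  shows "nth_npos p i < nth_npos p j"
proof -
  have ss: "sorted_wrt (<) (sorted_list_of_set (npos p))" using finite_npos by simp
  show ?thesis unfolding nth_npos_def
    using sorted_wrt_nth_less[OF ss, of "i - 1" "j - 1"] assms by simp
qed

lemma count_take_le: "count_list (take a p) x \<le> count_list p x"
proof -
  have "count_list p x = count_list (take a p) x + count_list (drop a p) x"
    by (metis append_take_drop_id count_list_append)
  then show ?thesis by simp
qed

lemma count_take_Suc: "count_list (take (Suc a) p) x \<le> Suc (count_list (take a p) x)"
  by (cases "a < length p") (auto simp: take_Suc_conv_app_nth)

locale lpm =
  fixes P Q :: "step list" and m r :: nat and idx :: "nat \<Rightarrow> 'n::finite"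
  assumes LP: "is_lattice_path m r P" and LQ: "is_lattice_path m r Q"
    and NA: "never_above P Q"
    and BI: "bij_betw idx {1..m+r} (UNIV :: 'n set)"
begin

abbreviation "n \<equiv> m + r"
abbreviation "hP a \<equiv> count_list (take a P) N"
abbreviation "hQ a \<equiv> count_list (take a Q) N"
abbreviation "u i \<equiv> nth_npos P i"
abbreviation "l i \<equiv> nth_npos Q i"
abbreviation "e j \<equiv> (axis (idx j) (1::real) :: real ^ 'n)"

lemma lenP: "length P = n" using LP count_EN[of P] by (simp add: is_lattice_path_def)
lemma lenQ: "length Q = n" using LQ count_EN[of Q] by (simp add: is_lattice_path_def)
lemma cardP: "card (npos P) = r" using LP by (simp add: is_lattice_path_def card_npos)
lemma cardQ: "card (npos Q) = r" using LQ by (simp add: is_lattice_path_def card_npos)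

lemma hle: "a \<le> n \<Longrightarrow> hP a \<le> hQ a" using NA lenP by (simp add: never_above_def)
lemma hPr: "hP a \<le> r" using LP count_take_le[of a P N] by (simp add: is_lattice_path_def)
lemma hQr: "hQ a \<le> r" using LQ count_take_le[of a Q N] by (simp add: is_lattice_path_def)
lemma hPn: "hP n = r" using LP lenP by (simp add: is_lattice_path_def)
lemma hQn: "hQ n = r" using LQ lenQ by (simp add: is_lattice_path_def)

lemma KLP: "1 \<le> i \<Longrightarrow> i \<le> r \<Longrightarrow> u i \<le> a \<longleftrightarrow> i \<le> hP a"
  using KL[of i P a] cardP by simp
lemma KLQ: "1 \<le> i \<Longrightarrow> i \<le> r \<Longrightarrow> l i \<le> a \<longleftrightarrow> i \<le> hQ a"
  using KL[of i Q a] cardQ by simp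

lemma u_range: "1 \<le> i \<Longrightarrow> i \<le> r \<Longrightarrow> u i \<in> {1..n}"
  using nth_npos_mem[of i P] cardP npos_sub[of P] lenP by auto
lemma l_range: "1 \<le> i \<Longrightarrow> i \<le> r \<Longrightarrow> l i \<in> {1..n}"
  using nth_npos_mem[of i Q] cardQ npos_sub[of Q] lenQ by auto

lemma LU: assumes "1 \<le> i" "i \<le> r" shows "l i \<le> u i"
proof -
  have "i \<le> hP (u i)" using KLP[OF assms, of "u i"] by simp
  also have "\<dots> \<le> hQ (u i)" using hle u_range[OF assms] by auto
  finally show ?thesis using KLQ[OF assms] by simp
qed

lemma u_less: "1 \<le> i \<Longrightarrow> i < j \<Longrightarrow> j \<le> r \<Longrightarrow> u i < u j"
  using nth_npos_less[of i j P] cardP by simp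
lemma l_less: "1 \<le> i \<Longrightarrow> i < j \<Longrightarrow> j \<le> r \<Longrightarrow> l i < l j"
  using nth_npos_less[of i j Q] cardQ by simp

lemma basis_sub:
  assumes "lpm_basis P Q r B" shows "B \<subseteq> {1..n}"
proof
  fix x assume x: "x \<in> B"
  from assms obtain f where f: "bij_betw f {1..r} B"
    "\<forall>i\<in>{1..r}. l i \<le> f i \<and> f i \<le> u i" by (auto simp: lpm_basis_def)
  have fB: "f ` {1..r} = B" using f(1) by (simp add: bij_betw_def)
  then obtain i where i: "i \<in> {1..r}" "x = f i" using x by blast
  have "l i \<le> f i" "f i \<le> u i" using f(2) i(1) by blast+
  moreover have "l i \<in> {1..n}" "u i \<in> {1..n}" using l_range[of i] u_range[of i] i(1) by simp_all
  ultimately show "x \<in> {1..n}" using i(2) by simp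
qed

lemma basis_count:
  assumes "lpm_basis P Q r B" and a: "a \<le> n" "hP a = hQ a"
  shows "card (B \<inter> {1..a}) = hP a"
proof -
  from assms obtain f where f: "bij_betw f {1..r} B"
    "\<forall>i\<in>{1..r}. l i \<le> f i \<and> f i \<le> u i" by (auto simp: lpm_basis_def)
  have fB: "f ` {1..r} = B" and finj: "inj_on f {1..r}" using f(1) by (simp_all add: bij_betw_def)
  have "B \<inter> {1..a} = f ` {1..hP a}"
  proof
    show "B \<inter> {1..a} \<subseteq> f ` {1..hP a}"
    proof
      fix x assume x: "x \<in> B \<inter> {1..a}"
      then obtain i where i: "i \<in> {1..r}" "x = f i" using fB by blast
      have "l i \<le> f i" using f(2) i(1) by blast
      then have "l i \<le> a" using x i(2) by simp
      then have "i \<le> hQ a" using KLQ[of i a] i(1) by simp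
      then show "x \<in> f ` {1..hP a}" using i a(2) by simp
    qed
  next
    show "f ` {1..hP a} \<subseteq> B \<inter> {1..a}"
    proof
      fix x assume "x \<in> f ` {1..hP a}"
      then obtain i where i: "i \<in> {1..hP a}" "x = f i" by blast
      have ir: "i \<in> {1..r}" using i(1) hPr[of a] by simp
      have "u i \<le> a" using KLP[of i a] i(1) ir by simp
      moreover have "l i \<le> f i" "f i \<le> u i" using f(2) ir by blast+
      moreover have "1 \<le> l i" using l_range[of i] ir by simp
      moreover have "f i \<in> B" using fB ir by blast
      ultimately show "x \<in> B \<inter> {1..a}" using i(2) by simp
    qed
  qed
  moreover have "inj_on f {1..hP a}"
    using inj_on_subset[OF finj, of "{1..hP a}"] hPr[of a] by simp
  ultimately show ?thesis by (simp add: card_image)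
qed

lemma basis_of_fun:
  assumes "\<And>i j. 1 \<le> i \<Longrightarrow> i < j \<Longrightarrow> j \<le> r \<Longrightarrow> f i < f j"
    and "\<And>i. 1 \<le> i \<Longrightarrow> i \<le> r \<Longrightarrow> l i \<le> f i \<and> f i \<le> u i"
  shows "lpm_basis P Q r (f ` {1..r})" "inj_on f {1..r}"
proof -
  show inj: "inj_on f {1..r}"
  proof (rule inj_onI)
    fix i j assume "i \<in> {1..r}" "j \<in> {1..r}" "f i = f j"
    then show "i = j" using assms(1)[of i j] assms(1)[of j i]
      by (metis atLeastAtMost_iff less_irrefl linorder_neqE_nat)
  qed
  then show "lpm_basis P Q r (f ` {1..r})"
    unfolding lpm_basis_def using assms(2) by (auto simp: bij_betw_def)
qed

lemma basisP: "lpm_basis P Q r (npos P)"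
proof -
  have b: "lpm_basis P Q r (u ` {1..r})" and inj: "inj_on u {1..r}"
    using basis_of_fun[of u] u_less LU by auto
  have "u ` {1..r} \<subseteq> npos P" using nth_npos_mem[of _ P] cardP by auto
  moreover have "card (u ` {1..r}) = card (npos P)" using card_image[OF inj] cardP by simp
  ultimately have "u ` {1..r} = npos P" using card_subset_eq finite_npos by blast
  then show ?thesis using b by simp
qed

end

context lpm
begin

lemma idx_inj: "a \<in> {1..n} \<Longrightarrow> b \<in> {1..n} \<Longrightarrow> idx a = idx b \<longleftrightarrow> a = b"
  using BI unfolding bij_betw_def inj_on_def by blast

lemma idx_surj: "\<exists>j\<in>{1..n}. i = idx j"
  using BI unfolding bij_betw_def by (metis UNIV_I imageE)

lemma e_comp: "a \<in> {1..n} \<Longrightarrow> j \<in> {1..n} \<Longrightarrow> e a $ idx j = (if a = j then 1 else 0)"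
  using idx_inj[of j a] unfolding axis_def by (simp add: vec_lambda_beta)

lemma coord:
  assumes "B \<subseteq> {1..n}" "j \<in> {1..n}"
  shows "(\<Sum>b\<in>B. e b) $ idx j = (if j \<in> B then 1 else 0)"
proof -
  have fin: "finite B" using assms(1) finite_subset by blast
  have "(\<Sum>b\<in>B. e b) $ idx j = (\<Sum>b\<in>B. e b $ idx j)" by simp
  also have "\<dots> = (\<Sum>b\<in>B. if b = j then 1 else 0)"
    using assms by (intro sum.cong) (auto simp: e_comp subset_eq)
  also have "\<dots> = (if j \<in> B then 1 else 0)" using fin by simp
  finally show ?thesis .
qed

lemma exch_basis:
  assumes c: "Suc c \<le> r" and x: "l (Suc c) \<le> x" "x \<le> u (Suc c)"
  defines "F \<equiv> (\<lambda>i. if i \<le> c then l i else if i = Suc c then x else u i)"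
  shows "lpm_basis P Q r (F ` {1..r})" "inj_on F {1..r}"
proof -
  have lu: "l (Suc c) \<le> u (Suc c)" using LU[of "Suc c"] c by simp
  have mono: "F i < F j" if ij: "1 \<le> i" "i < j" "j \<le> r" for i j
  proof -
    consider "j \<le> c" | "i \<le> c" "j = Suc c" | "i \<le> c" "j > Suc c" | "i = Suc c" "j > Suc c" | "i > Suc c"
      using ij by linarith
    then show ?thesis
    proof cases
      case 1 then show ?thesis using l_less[of i j] ij by (simp add: F_def)
    next
      case 2 then show ?thesis using l_less[of i "Suc c"] ij x by (simp add: F_def)
    next
      case 3 then show ?thesis using l_less[of i "Suc c"] u_less[of "Suc c" j] ij lu
        by (simp add: F_def)
    next
      case 4 then show ?thesis using u_less[of "Suc c" j] ij x by (simp add: F_def)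
    next
      case 5 then show ?thesis using u_less[of i j] ij by (simp add: F_def)
    qed
  qed
  have bnd: "l i \<le> F i \<and> F i \<le> u i" if "1 \<le> i" "i \<le> r" for i
    using LU[OF that] x by (simp add: F_def)
  show "lpm_basis P Q r (F ` {1..r})" "inj_on F {1..r}"
    using basis_of_fun[of F, OF mono bnd] by auto
qed

lemma exch_sum:
  assumes c: "Suc c \<le> r" and x: "l (Suc c) \<le> x" "x \<le> u (Suc c)"
  defines "F \<equiv> (\<lambda>i. if i \<le> c then l i else if i = Suc c then x else u i)"
  shows "(\<Sum>b\<in>F ` {1..r}. e b) = e x + (\<Sum>i\<in>{1..r} - {Suc c}. e (if i \<le> c then l i else u i))"
proof -
  have inj: "inj_on F {1..r}" using exch_basis[OF c x] by (simp add: F_def)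
  have "(\<Sum>b\<in>F ` {1..r}. e b) = (\<Sum>i\<in>{1..r}. e (F i))"
    using sum.reindex[OF inj] by simp
  also have "\<dots> = e (F (Suc c)) + (\<Sum>i\<in>{1..r} - {Suc c}. e (F i))"
    using c by (intro sum.remove) auto
  also have "(\<Sum>i\<in>{1..r} - {Suc c}. e (F i)) = (\<Sum>i\<in>{1..r} - {Suc c}. e (if i \<le> c then l i else u i))"
    by (intro sum.cong) (auto simp: F_def)
  also have "F (Suc c) = x" by (simp add: F_def)
  finally show ?thesis .
qed

lemma exch:
  assumes a: "1 \<le> a" "a \<le> n" "hP a \<noteq> hQ a"
  shows "\<exists>B B'. lpm_basis P Q r B \<and> lpm_basis P Q r B' \<and>
           (\<Sum>b\<in>B. e b) - (\<Sum>b\<in>B'. e b) = e a - e (Suc a)"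
proof -
  define c where "c = hP a"
  have cl: "c < hQ a" using hle[OF a(2)] a(3) by (simp add: c_def)
  then have c1: "Suc c \<le> r" using hQr[of a] by simp
  have x1: "l (Suc c) \<le> a" using KLQ[of "Suc c" a] c1 cl by simp
  have x2: "Suc a \<le> u (Suc c)" using KLP[of "Suc c" a] c1 by (simp add: c_def)
  have x1': "l (Suc c) \<le> Suc a" using x1 by simp
  have x2': "a \<le> u (Suc c)" using x2 by simp
  define F where "F \<equiv> (\<lambda>x i. if i \<le> c then l i else if i = Suc c then x else u i)"
  have b1: "lpm_basis P Q r (F a ` {1..r})" unfolding F_def by (rule exch_basis(1)[OF c1 x1 x2'])
  have b2: "lpm_basis P Q r (F (Suc a) ` {1..r})" unfolding F_def by (rule exch_basis(1)[OF c1 x1' x2])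
  have s1: "(\<Sum>b\<in>F a ` {1..r}. e b) = e a + (\<Sum>i\<in>{1..r} - {Suc c}. e (if i \<le> c then l i else u i))"
    unfolding F_def by (rule exch_sum[OF c1 x1 x2'])
  have s2: "(\<Sum>b\<in>F (Suc a) ` {1..r}. e b) = e (Suc a) + (\<Sum>i\<in>{1..r} - {Suc c}. e (if i \<le> c then l i else u i))"
    unfolding F_def by (rule exch_sum[OF c1 x1' x2])
  have d: "(\<Sum>b\<in>F a ` {1..r}. e b) - (\<Sum>b\<in>F (Suc a) ` {1..r}. e b) = e a - e (Suc a)"
    unfolding s1 s2 by simp
  show ?thesis using b1 b2 d by blast
qed

end

context lpm
begin

definition "TT = {a. a \<le> n \<and> hP a = hQ a}"
definition "AA = {a. 1 \<le> a \<and> a \<le> n \<and> hP a \<noteq> hQ a}"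
definition "g a = e a - e (Suc a)"
definition "VV = {(\<Sum>b\<in>B. e b) | B. lpm_basis P Q r B}"
definition "v0 = (\<Sum>b\<in>npos P. e b)"
definition "WW = {x::real^'n. \<forall>a\<in>TT. (\<Sum>j=1..a. x $ idx j) = 0}"

lemma AA_less: "a \<in> AA \<Longrightarrow> a < n"
proof -
  assume a: "a \<in> AA"
  have "hP n = hQ n" using hPn hQn by simp
  then show "a < n" using a unfolding AA_def by (metis (mono_tags, lifting) le_neq_implies_less mem_Collect_eq)
qed

lemma cnt:
  assumes "B \<subseteq> {1..n}" "a \<le> n"
  shows "(\<Sum>j=1..a. (\<Sum>b\<in>B. e b) $ idx j) = real (card (B \<inter> {1..a}))"
proof -
  have "(\<Sum>j=1..a. (\<Sum>b\<in>B. e b) $ idx j) = (\<Sum>j\<in>{1..a}. if j \<in> B then 1 else 0)"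
  proof (rule sum.cong)
    fix j assume "j \<in> {1..a}"
    then have "j \<in> {1..n}" using assms(2) by simp
    then show "(\<Sum>b\<in>B. e b) $ idx j = (if j \<in> B then 1 else 0)" using coord[OF assms(1)] by blast
  qed simp
  also have "\<dots> = (\<Sum>j\<in>{j\<in>{1..a}. j \<in> B}. 1)" by (rule sum.inter_filter[symmetric]) simp
  also have "{j\<in>{1..a}. j \<in> B} = B \<inter> {1..a}" by blast
  finally show ?thesis by simp
qed

lemma v0_in: "v0 \<in> VV"
  unfolding VV_def v0_def using basisP by blast

lemma D_sub_W: "(+) (- v0) ` VV \<subseteq> WW"
proof (rule subsetI)
  fix y assume "y \<in> (+) (- v0) ` VV"
  then obtain B where B: "lpm_basis P Q r B" "y = - v0 + (\<Sum>b\<in>B. e b)"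
    unfolding VV_def by blast
  have Bs: "B \<subseteq> {1..n}" using basis_sub[OF B(1)] .
  have Ps: "npos P \<subseteq> {1..n}" using basis_sub[OF basisP] .
  show "y \<in> WW"
  proof (unfold WW_def, intro CollectI ballI)
    fix a assume "a \<in> TT"
    then have a: "a \<le> n" "hP a = hQ a" unfolding TT_def by auto
    have "(\<Sum>j=1..a. y $ idx j) = (\<Sum>j=1..a. (\<Sum>b\<in>B. e b) $ idx j) - (\<Sum>j=1..a. v0 $ idx j)"
      unfolding B(2) by (simp add: sum_subtractf)
    also have "\<dots> = real (card (B \<inter> {1..a})) - real (card (npos P \<inter> {1..a}))"
      using cnt[OF Bs a(1)] cnt[OF Ps a(1)] unfolding v0_def by simp
    also have "\<dots> = 0" using basis_count[OF B(1) a] basis_count[OF basisP a] by simp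
    finally show "(\<Sum>j=1..a. y $ idx j) = 0" .
  qed
qed

lemma g_comp:
  assumes "a \<in> {1..<n}" "j \<in> {1..n}"
  shows "g a $ idx j = (if a = j then 1 else 0) - (if Suc a = j then 1 else 0)"
  using e_comp[of a j] e_comp[of "Suc a" j] assms unfolding g_def by simp

lemma W_sub_span: "WW \<subseteq> span (g ` AA)"
proof
  fix x assume x: "x \<in> WW"
  define S where "S a = (\<Sum>j=1..a. x $ idx j)" for a
  have S0: "S 0 = 0" by (simp add: S_def)
  have ST: "S a = 0" if "a \<in> TT" for a using x that unfolding WW_def S_def by blast
  have Z: "(if k \<in> AA then S k else 0) = S k" if "k \<le> n" for k
  proof (cases "k \<in> AA")
    case False
    then have "k = 0 \<or> k \<in> TT" using that unfolding AA_def TT_def by auto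
    then show ?thesis using False S0 ST by auto
  qed simp
  have finA: "finite AA" unfolding AA_def by (rule finite_subset[of _ "{..n}"]) auto
  have AAs: "a \<in> {1..<n}" if "a \<in> AA" for a using AA_less[OF that] that unfolding AA_def by simp
  have "x = (\<Sum>a\<in>AA. S a *\<^sub>R g a)"
  proof (subst vec_eq_iff, rule allI)
    fix i
    obtain j where j: "j \<in> {1..n}" "i = idx j" using idx_surj by blast
    obtain k where k: "j = Suc k" using j(1) by (cases j) auto
    have "(\<Sum>a\<in>AA. S a *\<^sub>R g a) $ idx j = (\<Sum>a\<in>AA. S a * (g a $ idx j))" by simp
    also have "\<dots> = (\<Sum>a\<in>AA. (if a = j then S a else 0) - (if a = k then S a else 0))"
    proof (rule sum.cong)
      fix a assume "a \<in> AA"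
      then have "g a $ idx j = (if a = j then 1 else 0) - (if Suc a = j then 1 else 0)"
        using g_comp[OF AAs j(1)] by blast
      moreover have "(Suc a = j) = (a = k)" using k by auto
      ultimately show "S a * (g a $ idx j) = (if a = j then S a else 0) - (if a = k then S a else 0)"
        by simp
    qed simp
    also have "\<dots> = (\<Sum>a\<in>AA. if a = j then S a else 0) - (\<Sum>a\<in>AA. if a = k then S a else 0)"
      by (rule sum_subtractf)
    also have "\<dots> = (if j \<in> AA then S j else 0) - (if k \<in> AA then S k else 0)"
      using finA by simp
    also have "\<dots> = S j - S k" using Z[of j] Z[of k] j(1) k by simp
    also have "\<dots> = x $ idx j"
      unfolding S_def k by simp
    finally show "x $ i = (\<Sum>a\<in>AA. S a *\<^sub>R g a) $ i" using j(2) by simp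
  qed
  also have "\<dots> \<in> span (g ` AA)"
    by (intro span_sum span_scale span_base) auto
  finally show "x \<in> span (g ` AA)" .
qed

lemma g_in_span: "g ` AA \<subseteq> span ((+) (- v0) ` VV)"
proof
  fix y assume "y \<in> g ` AA"
  then obtain a where a: "a \<in> AA" "y = g a" by blast
  then have "1 \<le> a" "a \<le> n" "hP a \<noteq> hQ a" unfolding AA_def by auto
  then obtain B B' where B: "lpm_basis P Q r B" "lpm_basis P Q r B'"
    "(\<Sum>b\<in>B. e b) - (\<Sum>b\<in>B'. e b) = e a - e (Suc a)" using exch by blast
  have m1: "- v0 + (\<Sum>b\<in>B. e b) \<in> (+) (- v0) ` VV" using B(1) unfolding VV_def by blast
  have m2: "- v0 + (\<Sum>b\<in>B'. e b) \<in> (+) (- v0) ` VV" using B(2) unfolding VV_def by blast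
  have "y = (- v0 + (\<Sum>b\<in>B. e b)) - (- v0 + (\<Sum>b\<in>B'. e b))"
    using B(3) a(2) unfolding g_def by simp
  also have "\<dots> \<in> span ((+) (- v0) ` VV)"
    using m1 m2 by (intro span_diff span_base)
  finally show "y \<in> span ((+) (- v0) ` VV)" .
qed

lemma g_inj: "inj_on g AA"
proof (rule inj_onI)
  fix a b assume a: "a \<in> AA" and b: "b \<in> AA" and eq: "g a = g b"
  have ar: "a \<in> {1..<n}" and br: "b \<in> {1..<n}"
    using a b AA_less unfolding AA_def by auto
  have aj: "a \<in> {1..n}" using ar by simp
  have "g a $ idx a = 1" using g_comp[OF ar aj] by simp
  moreover have "g b $ idx a = (if b = a then 1 else 0) - (if Suc b = a then 1 else 0)"
    using g_comp[OF br aj] .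
  ultimately have "(if b = a then 1 else 0) - (if Suc b = a then 1 else 0) = (1::real)"
    using eq by simp
  then show "a = b" by (cases "b = a"; cases "Suc b = a") auto
qed

lemma g_indep: "A \<subseteq> AA \<Longrightarrow> independent (g ` A)"
proof -
  have finA: "finite AA" unfolding AA_def by (rule finite_subset[of _ "{..n}"]) auto
  assume "A \<subseteq> AA"
  then have fin: "finite A" using finite_subset finA by blast
  have "A \<subseteq> AA \<longrightarrow> independent (g ` A)"
    using fin
  proof (induction A rule: finite_linorder_max_induct)
    case empty
    then show ?case using independent_empty by simp
  next
    case (insert b A)
    show ?case
    proof
      assume sub: "insert b A \<subseteq> AA"
      then have ind: "independent (g ` A)" using insert.IH by blast
      have bA: "b \<in> AA" using sub by blast
      have br: "b \<in> {1..<n}" using AA_less[OF bA] bA unfolding AA_def by simp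
      have bj: "Suc b \<in> {1..n}" using br by simp
      have sz: "subspace {x::real^'n. x $ idx (Suc b) = 0}"
        unfolding subspace_def by simp
      have "g ` A \<subseteq> {x::real^'n. x $ idx (Suc b) = 0}"
      proof (rule subsetI)
        fix y assume "y \<in> g ` A"
        then obtain a where a: "a \<in> A" "y = g a" by blast
        have aA: "a \<in> AA" using sub a(1) by blast
        have ar: "a \<in> {1..<n}" using AA_less[OF aA] aA unfolding AA_def by simp
        have "a < b" using insert.hyps(2) a(1) by blast
        then show "y \<in> {x::real^'n. x $ idx (Suc b) = 0}"
          using g_comp[OF ar bj] a(2) by simp
      qed
      then have sp: "span (g ` A) \<subseteq> {x::real^'n. x $ idx (Suc b) = 0}"
        using span_minimal sz by blast
      have "g b $ idx (Suc b) = -1" using g_comp[OF br bj] by simp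
      then have "g b \<notin> {x::real^'n. x $ idx (Suc b) = 0}" by simp
      then have nsp: "g b \<notin> span (g ` A)" by (rule contra_subsetD[OF sp])
      have "independent (insert (g b) (g ` A))" by (rule independent_insertI[OF nsp ind])
      then show "independent (g ` insert b A)" by simp
    qed
  qed
  then show "independent (g ` A)" using \<open>A \<subseteq> AA\<close> by blast
qed

lemma aff_dim_VV: "aff_dim VV = int (card AA)"
proof -
  let ?D = "(+) (- v0) ` VV"
  have h: "v0 \<in> affine hull VV" by (rule hull_inc[OF v0_in])
  have a1: "aff_dim VV = int (dim ?D)" by (rule aff_dim_eq_dim[OF h])
  have eq: "span ?D = span (g ` AA)"
  proof
    have "?D \<subseteq> span (g ` AA)" using D_sub_W W_sub_span by (rule subset_trans)
    then show "span ?D \<subseteq> span (g ` AA)"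
      by (rule span_minimal[OF _ subspace_span])
    show "span (g ` AA) \<subseteq> span ?D"
      by (rule span_minimal[OF g_in_span subspace_span])
  qed
  have "dim ?D = dim (span ?D)" by (rule dim_span[symmetric])
  also have "\<dots> = dim (span (g ` AA))" using eq by (rule arg_cong)
  also have "\<dots> = dim (g ` AA)" by (rule dim_span)
  also have "\<dots> = card (g ` AA)" by (rule dim_eq_card_independent[OF g_indep]) simp
  also have "\<dots> = card AA" by (rule card_image[OF g_inj])
  finally show ?thesis using a1 by simp
qed

end

context lpm
begin

lemma pt_sum: "i \<le> length p \<Longrightarrow> fst (pt p i) + snd (pt p i) = i"
  using count_EN[of "take i p"] by (simp add: pt_def)

lemma zero_TT: "0 \<in> TT" unfolding TT_def by simp

lemma TT_sub: "TT \<subseteq> {0..n}" unfolding TT_def by auto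

lemma card_AA: "int (card AA) = int n - int (card TT) + 1"
proof -
  have AAeq: "AA = {1..n} - TT" unfolding AA_def TT_def by auto
  have finT: "finite TT" using TT_sub finite_subset by blast
  have i: "{1..n} \<inter> TT = TT - {0}" using TT_sub by auto
  have c1: "card (TT - {0}) = card TT - 1" using zero_TT finT by simp
  have c2: "card (TT - {0}) \<le> n"
  proof -
    have "TT - {0} \<subseteq> {1..n}" using TT_sub by auto
    then show ?thesis using card_mono[of "{1..n}" "TT - {0}"] by simp
  qed
  have "card TT \<noteq> 0" using zero_TT finT card_0_eq by blast
  then have c3: "card TT \<ge> 1" by simp
  have "card AA = card {1..n} - card ({1..n} \<inter> TT)"
    unfolding AAeq by (rule card_Diff_subset_Int) simp
  then have "card AA = n - (card TT - 1)" using i c1 by simp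
  then show ?thesis using c1 c2 c3 by linarith
qed

lemma lp_card: "card (lattice_points P \<inter> lattice_points Q) = card TT"
proof -
  have eq: "lattice_points P \<inter> lattice_points Q = pt P ` TT"
  proof
    show "lattice_points P \<inter> lattice_points Q \<subseteq> pt P ` TT"
    proof (rule subsetI)
      fix z assume "z \<in> lattice_points P \<inter> lattice_points Q"
      then obtain i j where ij: "i \<le> n" "j \<le> n" "z = pt P i" "z = pt Q j"
        unfolding lattice_points_def using lenP lenQ by auto
      have "i = fst z + snd z" using pt_sum[of i P] ij lenP by simp
      also have "\<dots> = j" using pt_sum[of j Q] ij lenQ by simp
      finally have "i = j" .
      then have "hP i = hQ i" using ij by (simp add: pt_def)
      then show "z \<in> pt P ` TT" using ij unfolding TT_def by auto
    qed
  next
    show "pt P ` TT \<subseteq> lattice_points P \<inter> lattice_points Q"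
    proof (rule subsetI)
      fix z assume "z \<in> pt P ` TT"
      then obtain i where i: "i \<le> n" "hP i = hQ i" "z = pt P i" unfolding TT_def by auto
      have "fst (pt P i) = i - hP i" using pt_sum[of i P] i lenP by (simp add: pt_def)
      moreover have "fst (pt Q i) = i - hQ i" using pt_sum[of i Q] i lenQ by (simp add: pt_def)
      ultimately have "pt P i = pt Q i" using i(2) by (simp add: pt_def)
      moreover have "pt P i \<in> pt P ` {0..length P}" using i(1) lenP by simp
      moreover have "pt Q i \<in> pt Q ` {0..length Q}" using i(1) lenQ by simp
      ultimately show "z \<in> lattice_points P \<inter> lattice_points Q"
        unfolding lattice_points_def using i(3) by simp
    qed
  qed
  have inj: "inj_on (pt P) TT"
  proof (rule inj_onI)
    fix i j assume ij: "i \<in> TT" "j \<in> TT" "pt P i = pt P j"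
    have "i \<le> length P" "j \<le> length P" using ij(1,2) lenP unfolding TT_def by auto
    then have "i = fst (pt P i) + snd (pt P i)" "j = fst (pt P j) + snd (pt P j)"
      using pt_sum by metis+
    then show "i = j" using ij(3) by simp
  qed
  show ?thesis unfolding eq by (rule card_image[OF inj])
qed

lemma main:
  "aff_dim (lpm_polytope idx P Q r)
     = int (m + r) - int (card (lattice_points P \<inter> lattice_points Q)) + 1"
proof -
  have "lpm_polytope idx P Q r = convex hull VV" unfolding lpm_polytope_def VV_def by simp
  then have "aff_dim (lpm_polytope idx P Q r) = aff_dim VV" by (simp add: aff_dim_convex_hull)
  then show ?thesis using aff_dim_VV card_AA lp_card by simp
qed

end

theorem corollary3p4:
  fixes P Q :: "step list" and m r :: nat and idx :: "nat \<Rightarrow> 'n::finite"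
  assumes "is_lattice_path m r P" and "is_lattice_path m r Q"
    and "never_above P Q"
    and "bij_betw idx {1..m+r} (UNIV :: 'n set)"
  shows "aff_dim (lpm_polytope idx P Q r)
           = int (m + r) - int (card (lattice_points P \<inter> lattice_points Q)) + 1"
proof -
  interpret lpm P Q m r idx using assms by unfold_locales
  show ?thesis by (rule main)
qed

end
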